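(* Let $Y=y-y_I$ be as in the context. Then \[ \bigl|\mathcal{I}\bigl(\langle Y',\mathcal{I}^{1-\alpha}Y'\rangle\bigr)(T)\bigr|\le C(1-\alpha)\sum_{j=1}^{N-2}\tau_j^{-\alpha}\|Y\|_{I_j}^2+C\tau^{1-\alpha}\|Y'\|_{L^2(J)}^2, \] where $\|Y\|_{I_j}=\sup_{t\in I_j}\|Y(t)\|$.
   Context: $\Omega\subset\mathbb{R}^d$ ($d\le3$) convex polyhedron, $0<\alpha<1$, $\kappa\in W^{1,\infty}(\Omega)$, $\kappa\ge\kappa_{\min}>0$, $\mathcal{A}w=-\nabla\cdot(\kappa\nabla w)$ with homogeneous Dirichlet conditions. $\mathcal{I}g(t)=\int_0^tg(s)\,ds$, $\omega_\beta(t)=t^{\beta-1}/\Gamma(\beta)$, $\mathcal{I}^\beta v(t)=\int_0^t\omega_\beta(t-s)v(s)\,ds$, $(\mathcal{J}_T^\beta w)(t)=\int_t^T\omega_\beta(s-t)w(s)\,ds$, $\partial_t^\alpha v=\mathcal{I}^{1-\alpha}v'$. $\langle\cdot,\cdot\rangle$, $\|\cdot\|$: $L^2(\Omega)$ inner product and norm; $J=(0,T)$, $\|w\|_{L^2(J)}^2=\int_0^T\|w\|^2dt$. $u$ solves $\partial_t^\alpha u+\mathcal{A}u=f$ on $\Omega\times(0,T]$, $u=0$ on $\partial\Omega$, $u(0)=u_0$. Time mesh $t_n=(n\tau)^\gamma$, $0\le n\le N$, $\tau=T^{1/\gamma}/N$, $\gamma\ge1$, $\tau_n=t_n-t_{n-1}$,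 $I_n=(t_{n-1},t_n)$. $U$ is continuous, linear in $t$ on each $\overline{I_n}$, $U(0)=u_0$, with $\frac{1}{\tau_n}\int_{I_n}\partial_t^\alpha U\,dt+\mathcal{A}\tfrac12(U(t_n)+U(t_{n-1}))=\tau_n^{-1}\int_{I_n}f\,dt$; $\eta=u-U$. $\varphi$ solves $-(\mathcal{J}_T^{1-\alpha}\varphi)'+\mathcal{A}\varphi=\eta$ on $(0,T)$, $\varphi(T)=0$, with homogeneous Dirichlet conditions; $y(t)=\varphi(0)+\int_0^t\varphi(s)ds$, $y_I$ is the continuous piecewise-linear interpolant of $y$ at the nodes $t_j$, $Y=y-y_I$. $C$ is a generic constant bounded for $0<\alpha\le1$, independent of $N,\tau$. *)

theory Defs
  imports "HOL-Analysis.Analysis"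
begin

definition meshpar :: "real \<Rightarrow> real \<Rightarrow> nat \<Rightarrow> real" where
  "meshpar T \<gamma> N = T powr (1 / \<gamma>) / real N"

definition tmesh :: "real \<Rightarrow> real \<Rightarrow> nat \<Rightarrow> nat \<Rightarrow> real" where
  "tmesh T \<gamma> N n = (real n * meshpar T \<gamma> N) powr \<gamma>"

text \<open>tau_n = t_n - t_(n-1) (used for n >= 1).\<close>
definition tstep :: "real \<Rightarrow> real \<Rightarrow> nat \<Rightarrow> nat \<Rightarrow> real" where
  "tstep T \<gamma> N n = tmesh T \<gamma> N n - tmesh T \<gamma> N (n - 1)"

definition omega :: "real \<Rightarrow> real \<Rightarrow> real" where
  "omega \<beta> t = t powr (\<beta> - 1) / Gamma \<beta>"

definition RL_int :: "real \<Rightarrow> (real \<Rightarrow> 'a::{banach, second_countable_topology}) \<Rightarrow> real \<Rightarrow> 'a" where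
  "RL_int \<beta> v t = (LINT s:{0..t}|lborel. omega \<beta> (t - s) *\<^sub>R v s)"

definition prim :: "'a::{banach, second_countable_topology} \<Rightarrow> (real \<Rightarrow> 'a) \<Rightarrow> real \<Rightarrow> 'a" where
  "prim y0 \<phi> t = y0 + (LINT s:{0..t}|lborel. \<phi> s)"

definition interp :: "real \<Rightarrow> real \<Rightarrow> nat \<Rightarrow> (real \<Rightarrow> 'a::real_vector) \<Rightarrow> real \<Rightarrow> 'a" where
  "interp T \<gamma> N y t =
     (if t \<le> 0 then y 0 else
      (\<Sum>n\<in>{1..N}. indicator {tmesh T \<gamma> N (n - 1)<..tmesh T \<gamma> N n} t *\<^sub>R
         (((tmesh T \<gamma> N n - t) / tstep T \<gamma> N n) *\<^sub>R y (tmesh T \<gamma> N (n - 1))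
          + ((t - tmesh T \<gamma> N (n - 1)) / tstep T \<gamma> N n) *\<^sub>R y (tmesh T \<gamma> N n))))"

definition Yerr :: "real \<Rightarrow> real \<Rightarrow> nat \<Rightarrow> (real \<Rightarrow> 'a::real_vector) \<Rightarrow> real \<Rightarrow> 'a" where
  "Yerr T \<gamma> N y t = y t - interp T \<gamma> N y t"

text \<open>Y' = y' - y_I' = phi - (y(t_n)-y(t_(n-1)))/tau_n on each open interval I_n
  (the (a.e.) derivative of Y on (0,T)).\<close>
definition Yder :: "real \<Rightarrow> real \<Rightarrow> nat \<Rightarrow> (real \<Rightarrow> 'a::real_vector) \<Rightarrow> (real \<Rightarrow> 'a) \<Rightarrow> real \<Rightarrow> 'a" where
  "Yder T \<gamma> N y \<phi> t =
     (\<Sum>n\<in>{1..N}. indicator {tmesh T \<gamma> N (n - 1)<..<tmesh T \<gamma> N n} t *\<^sub>R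
        (\<phi> t - (1 / tstep T \<gamma> N n) *\<^sub>R (y (tmesh T \<gamma> N n) - y (tmesh T \<gamma> N (n - 1)))))"

end

theory Submission
  imports Defs
begin

lemma powr_diff_bounds:
  fixes a b g :: real
  assumes "0 \<le> a" "a \<le> b" "g \<ge> 1"
  shows "g * a powr (g - 1) * (b - a) \<le> b powr g - a powr g"
    and "b powr g - a powr g \<le> g * b powr (g - 1) * (b - a)"
proof -
  have "g * a powr (g - 1) * (b - a) \<le> b powr g - a powr g \<and> b powr g - a powr g \<le> g * b powr (g - 1) * (b - a)"
  proof (cases "a = b")
    case True then show ?thesis by simp
  next
    case False
    show ?thesis
    proof (cases "a = 0")
      case True
      have "b > 0" using assms False True by auto
      have "b powr g = b powr (g - 1) * b" using \<open>b > 0\<close> by (simp add: powr_diff)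
      moreover have "b powr (g-1) * b \<le> g * b powr (g - 1) * b" using \<open>b>0\<close> assms
        by (simp add: mult_right_mono)
      ultimately show ?thesis using True \<open>b>0\<close> by simp
    next
      case a0: False
      have ab: "a < b" using False assms by auto
      have "\<And>x. a \<le> x \<Longrightarrow> x \<le> b \<Longrightarrow> DERIV (\<lambda>x. x powr g) x :> g * x powr (g - 1)"
        using a0 assms by (intro has_real_derivative_powr) auto
      from MVT2[OF ab this] obtain z where z: "a < z" "z < b" "b powr g - a powr g = (b - a) * (g * z powr (g - 1))"
        by blast
      have "a powr (g-1) \<le> z powr (g-1)" using z assms by (intro powr_mono2) auto
      moreover have "z powr (g-1) \<le> b powr (g-1)" using z assms by (intro powr_mono2) auto
      ultimately have "(b-a)*(g*a powr (g-1)) \<le> (b-a)*(g*z powr (g-1))" "(b-a)*(g*z powr (g-1)) \<le> (b-a)*(g*b powr (g-1))"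
        using ab assms by (auto intro!: mult_left_mono)
      then show ?thesis using z by (simp add: algebra_simps)
    qed
  qed
  then show "g * a powr (g - 1) * (b - a) \<le> b powr g - a powr g"
    and "b powr g - a powr g \<le> g * b powr (g - 1) * (b - a)" by auto
qed

locale mesh =
  fixes T \<gamma> :: real and N :: nat
  assumes T: "T > 0" and gam: "\<gamma> \<ge> 1" and N: "N \<ge> 1"
begin

definition "tt n = tmesh T \<gamma> N n"
definition "ts n = tstep T \<gamma> N n"
definition "tau = meshpar T \<gamma> N"
definition "BB = max 1 (\<gamma> * (2 * T powr (1/\<gamma>)) powr (\<gamma> - 1))"

lemma tau_pos: "tau > 0"
  using T N by (simp add: tau_def meshpar_def)

lemma tt_def': "tt n = (real n * tau) powr \<gamma>"
  by (simp add: tt_def tmesh_def tau_def)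

lemma ts_def': "ts n = tt n - tt (n - 1)"
  by (simp add: ts_def tstep_def tt_def)

lemma tt0[simp]: "tt 0 = 0"
  by (simp add: tt_def')

lemma ttN: "tt N = T"
proof -
  have "real N * tau = T powr (1/\<gamma>)" using N by (simp add: tau_def meshpar_def)
  then show ?thesis using T gam by (simp add: tt_def' powr_powr)
qed

lemma tt_nonneg: "tt n \<ge> 0"
  by (simp add: tt_def')

lemma tt_less: "n < m \<Longrightarrow> tt n < tt m"
  unfolding tt_def' using tau_pos gam
  by (intro powr_less_mono2) (auto intro: mult_strict_right_mono)

lemma tt_le: "n \<le> m \<Longrightarrow> tt n \<le> tt m"
  by (metis order.order_iff_strict tt_less)

lemma tt_less_iff: "tt n < tt m \<longleftrightarrow> n < m"
  by (metis linorder_not_le tt_le tt_less)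

lemma tt_le_iff: "tt n \<le> tt m \<longleftrightarrow> n \<le> m"
  by (meson linorder_not_le tt_less tt_le)

lemma ts_nonneg: "ts n \<ge> 0"
  by (simp add: ts_def' tt_le)

lemma ts_pos: "n \<ge> 1 \<Longrightarrow> ts n > 0"
  by (simp add: ts_def' tt_less)

lemma ts_mono_Suc: "ts n \<le> ts (Suc n)"
proof (cases "n = 0")
  case True then show ?thesis by (simp add: ts_def' tt_nonneg)
next
  case False
  let ?x = "real n * tau"
  have e1: "tt n = ?x powr \<gamma>" "tt (n-1) = (?x - tau) powr \<gamma>" "tt (Suc n) = (?x + tau) powr \<gamma>"
    using False by (auto simp: tt_def' of_nat_diff algebra_simps)
  have x: "?x - tau \<ge> 0" using False tau_pos by (auto simp: algebra_simps)
  have "?x powr \<gamma> - (?x - tau) powr \<gamma> \<le> \<gamma> * ?x powr (\<gamma> - 1) * tau"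
    using powr_diff_bounds(2)[of "?x - tau" ?x \<gamma>] x gam tau_pos by simp
  also have "\<dots> \<le> (?x + tau) powr \<gamma> - ?x powr \<gamma>"
    using powr_diff_bounds(1)[of ?x "?x + tau" \<gamma>] x gam tau_pos by simp
  finally have "?x powr \<gamma> - (?x - tau) powr \<gamma> \<le> (?x + tau) powr \<gamma> - ?x powr \<gamma>" .
  moreover have "ts (Suc n) = tt (Suc n) - tt n" "ts n = tt n - tt (n-1)" by (simp_all add: ts_def')
  ultimately show ?thesis using e1 by linarith
qed

lemma ts_mono: "n \<le> m \<Longrightarrow> ts n \<le> ts m"
  by (induction m rule: dec_induct) (auto intro: order.trans ts_mono_Suc)

lemma BB_ge1: "BB \<ge> 1" by (simp add: BB_def)

lemma ts_bound: "n \<le> N + 1 \<Longrightarrow> ts n \<le> BB * tau"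
proof (cases "n = 0")
  case True then show ?thesis using tau_pos BB_ge1 by (simp add: ts_def')
next
  case False
  assume n: "n \<le> N + 1"
  let ?x = "real n * tau"
  have e1: "tt n = ?x powr \<gamma>" "tt (n-1) = (?x - tau) powr \<gamma>"
    using False by (auto simp: tt_def' of_nat_diff algebra_simps)
  have x: "?x - tau \<ge> 0" using False tau_pos by (auto simp: algebra_simps)
  have "ts n = ?x powr \<gamma> - (?x - tau) powr \<gamma>" by (simp only: ts_def' e1)
  then have "ts n \<le> \<gamma> * ?x powr (\<gamma> - 1) * tau"
    using powr_diff_bounds(2)[of "?x - tau" ?x \<gamma>] x gam tau_pos by simp
  also have "?x \<le> 2 * T powr (1/\<gamma>)"
  proof -
    have "real N * tau = T powr (1/\<gamma>)" using N by (simp add: tau_def meshpar_def)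
    moreover have "?x \<le> 2 * real N * tau" using n N tau_pos by (intro mult_right_mono) auto
    ultimately show ?thesis by simp
  qed
  then have "\<gamma> * ?x powr (\<gamma> - 1) * tau \<le> \<gamma> * (2 * T powr (1/\<gamma>)) powr (\<gamma> - 1) * tau"
    using gam tau_pos by (intro mult_right_mono mult_left_mono powr_mono2) auto
  also have "\<dots> \<le> BB * tau" unfolding BB_def using tau_pos by (intro mult_right_mono) auto
  finally show ?thesis .
qed

lemma ts_Suc_eq: "tt (Suc n) = tt n + ts (Suc n)"
  by (simp add: ts_def')

lemma interval_exists:
  assumes "0 < s" "s \<le> T"
  shows "\<exists>i\<in>{1..N}. tt (i - 1) < s \<and> s \<le> tt i"
proof -
  define i where "i = (LEAST i. s \<le> tt i)"
  have ex: "s \<le> tt N" using assms ttN by simp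
  have i1: "s \<le> tt i" unfolding i_def by (rule LeastI[of _ N]) (rule ex)
  have i2: "i \<le> N" unfolding i_def by (rule Least_le) (rule ex)
  have i0: "i \<noteq> 0"
  proof
    assume "i = 0" then show False using i1 assms by simp
  qed
  have "\<not> s \<le> tt (i - 1)" unfolding i_def
    by (rule not_less_Least) (use i0 i_def in auto)
  then show ?thesis using i0 i1 i2 by (intro bexI[of _ i]) auto
qed

end

lemma Gamma_lower:
  fixes x :: real assumes "1 \<le> x" "x \<le> 2"
  shows "Gamma x \<ge> 1/6"
proof -
  have "ennreal (1/6) = (\<integral>\<^sup>+t. ennreal (t / 3) * indicator {0..1} t \<partial>lborel)"
  proof -
    have "(\<integral>\<^sup>+t. ennreal (t / 3) * indicator {0..1} t \<partial>lborel) = (\<lambda>t::real. t^2/6) 1 - (\<lambda>t. t^2/6) 0"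
      by (rule nn_integral_FTC_Icc) (auto intro!: derivative_eq_intros simp: field_simps)
    then show ?thesis by simp
  qed
  also have "\<dots> \<le> (\<integral>\<^sup>+t. ennreal (indicator {0..} t * t powr (x - 1) / exp t) \<partial>lborel)"
  proof (intro nn_integral_mono)
    fix t :: real
    show "ennreal (t / 3) * indicator {0..1} t \<le> ennreal (indicator {0..} t * t powr (x - 1) / exp t)"
    proof (cases "t \<in> {0..1}")
      case True
      have "t = t powr 1" using True by simp
      also have "\<dots> \<le> t powr (x - 1)" using True assms by (intro powr_mono') auto
      finally have h1: "t \<le> t powr (x-1)" .
      have "exp t \<le> exp 1" using True by simp
      also have "\<dots> \<le> 3" by (rule exp_le)
      finally have h2: "exp t \<le> 3" .
      have "t / 3 \<le> t / exp t" using True h2 by (intro divide_left_mono) auto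
      also have "\<dots> \<le> t powr (x - 1) / exp t" using h1 by (intro divide_right_mono) auto
      finally show ?thesis using True by (auto intro!: ennreal_leI)
    qed auto
  qed
  also have "\<dots> = Gamma x" using assms by (subst Gamma_conv_nn_integral_real) auto
  finally have "ennreal (1/6) \<le> ennreal (Gamma x)" using assms by (simp add: Gamma_real_nonneg)
  then show ?thesis using assms by (subst (asm) ennreal_le_iff) auto
qed

lemma Gamma_bounds:
  fixes \<alpha> :: real assumes "0 < \<alpha>" "\<alpha> < 1"
  shows "(1-\<alpha>) * Gamma (1-\<alpha>) \<ge> 1/6" "Gamma (1-\<alpha>) \<ge> 1/6"
proof -
  have "1 - \<alpha> \<notin> \<int>\<^sub>\<le>\<^sub>0" using assms by (auto elim!: nonpos_Ints_cases)
  from Gamma_plus1[OF this] have "Gamma (2 - \<alpha>) = (1-\<alpha>) * Gamma (1-\<alpha>)"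
    by (simp add: algebra_simps)
  moreover have "Gamma (2-\<alpha>) \<ge> 1/6" using assms by (intro Gamma_lower) auto
  ultimately show 1: "(1-\<alpha>) * Gamma (1-\<alpha>) \<ge> 1/6" by simp
  have "Gamma (1-\<alpha>) > 0" using assms by auto
  then have "(1-\<alpha>) * Gamma (1-\<alpha>) \<le> Gamma (1-\<alpha>)" using assms by (simp add: mult_left_le_one_le)
  then show "Gamma (1-\<alpha>) \<ge> 1/6" using 1 by linarith
qed

lemma omega_eq: "omega (1-\<alpha>) x = x powr (-\<alpha>) / Gamma (1-\<alpha>)"
  by (simp add: omega_def)

lemma pow_int0:
  fixes \<alpha> L :: real assumes "0 < \<alpha>" "\<alpha> < 1" "L \<ge> 0"
  shows "(\<integral>\<^sup>+x. ennreal (indicator {0..L} x * omega (1-\<alpha>) x) \<partial>lborel)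
          = ennreal (L powr (1-\<alpha>) / ((1-\<alpha>) * Gamma (1-\<alpha>)))"
proof -
  have "((\<lambda>x. x powr (-\<alpha>)) has_integral (L powr (-\<alpha>+1) / (-\<alpha>+1))) {0..L}"
    using assms by (intro has_integral_powr_from_0) auto
  from has_integral_divide[OF this, of "Gamma (1-\<alpha>)"]
  have "(omega (1-\<alpha>) has_integral (L powr (1-\<alpha>) / ((1-\<alpha>) * Gamma (1-\<alpha>)))) {0..L}"
    by (simp add: omega_eq[abs_def] field_simps)
  from nn_integral_has_integral_lebesgue[OF _ this]
  show ?thesis using assms by (simp add: omega_eq)
qed

lemma omega_nonneg: "\<alpha> < 1 \<Longrightarrow> omega (1-\<alpha>) x \<ge> 0"
  by (simp add: omega_eq)

lemma pow_int_left:
  fixes \<alpha> a c :: real assumes "0 < \<alpha>" "\<alpha> < 1" "a \<le> c"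
  shows "(\<integral>\<^sup>+s. ennreal (indicator {a..c} s * omega (1-\<alpha>) (c - s)) \<partial>lborel)
          = ennreal ((c - a) powr (1-\<alpha>) / ((1-\<alpha>) * Gamma (1-\<alpha>)))"
proof -
  have "(\<integral>\<^sup>+s. ennreal (indicator {a..c} s * omega (1-\<alpha>) (c - s)) \<partial>lborel)
     = (\<integral>\<^sup>+x. ennreal (indicator {a..c} (c - x) * omega (1-\<alpha>) x) \<partial>lborel)"
    using nn_integral_real_affine[of "\<lambda>s. ennreal (indicator {a..c} s * omega (1-\<alpha>) (c - s))" "-1" c]
    by (simp add: omega_def)
  also have "\<dots> = (\<integral>\<^sup>+x. ennreal (indicator {0..c-a} x * omega (1-\<alpha>) x) \<partial>lborel)"
    by (intro nn_integral_cong) (auto simp: indicator_def)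
  finally show ?thesis using pow_int0[of \<alpha> "c - a"] assms by simp
qed

lemma pow_int_right:
  fixes \<alpha> s b :: real assumes "0 < \<alpha>" "\<alpha> < 1" "s \<le> b"
  shows "(\<integral>\<^sup>+t. ennreal (indicator {s..b} t * omega (1-\<alpha>) (t - s)) \<partial>lborel)
          = ennreal ((b - s) powr (1-\<alpha>) / ((1-\<alpha>) * Gamma (1-\<alpha>)))"
proof -
  have "(\<integral>\<^sup>+t. ennreal (indicator {s..b} t * omega (1-\<alpha>) (t - s)) \<partial>lborel)
     = (\<integral>\<^sup>+x. ennreal (indicator {s..b} (s + x) * omega (1-\<alpha>) x) \<partial>lborel)"
    using nn_integral_real_affine[of "\<lambda>t. ennreal (indicator {s..b} t * omega (1-\<alpha>) (t - s))" 1 s]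
    by (simp add: omega_def)
  also have "\<dots> = (\<integral>\<^sup>+x. ennreal (indicator {0..b-s} x * omega (1-\<alpha>) x) \<partial>lborel)"
    by (intro nn_integral_cong) (auto simp: indicator_def)
  finally show ?thesis using pow_int0[of \<alpha> "b - s"] assms by simp
qed

lemma omega_antimono: "\<alpha> > 0 \<Longrightarrow> \<alpha> < 1 \<Longrightarrow> 0 < x \<Longrightarrow> x \<le> y \<Longrightarrow> omega (1-\<alpha>) y \<le> omega (1-\<alpha>) x"
  unfolding omega_eq by (intro divide_right_mono powr_mono2') auto

locale setting = mesh T \<gamma> N for T \<gamma> :: real and N :: nat +
  fixes \<alpha> :: real and y0 :: "'a::{real_inner, banach, second_countable_topology}" and \<phi> :: "real \<Rightarrow> 'a"
  assumes al0: "0 < \<alpha>" and al1: "\<alpha> < 1"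
    and phim: "\<phi> \<in> borel_measurable lborel"
    and phi2: "set_integrable lborel {0..T} (\<lambda>t. (norm (\<phi> t))\<^sup>2)"
begin

definition "y = prim y0 \<phi>"
definition "dd j = (1 / ts j) *\<^sub>R (y (tt j) - y (tt (j - 1)))"
definition "g = Yder T \<gamma> N y \<phi>"

lemma phim'[measurable]: "\<phi> \<in> borel_measurable borel"
  using phim by simp

lemma g_eq: "g t = (\<Sum>n\<in>{1..N}. indicator {tt (n-1)<..<tt n} t *\<^sub>R (\<phi> t - dd n))"
  by (simp add: g_def Yder_def dd_def tt_def ts_def)

lemma g_meas[measurable]: "g \<in> borel_measurable borel"
  unfolding g_eq[abs_def] by measurable

lemma unique_Ioc:
  assumes "n \<in> {1..N}" "m \<in> {1..N}" "t \<in> {tt (n-1)<..tt n}" "t \<in> {tt (m-1)<..tt m}"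
  shows "n = m"
proof (rule ccontr)
  assume "n \<noteq> m"
  then consider "n < m" | "m < n" by linarith
  then show False
  proof cases
    case 1
    then have "tt n \<le> tt (m - 1)" by (intro tt_le) auto
    then show False using assms by auto
  next
    case 2
    then have "tt m \<le> tt (n - 1)" by (intro tt_le) auto
    then show False using assms by auto
  qed
qed

lemma sum_single_Ioc:
  fixes f :: "nat \<Rightarrow> 'b::real_vector"
  assumes "n \<in> {1..N}" "t \<in> {tt (n-1)<..tt n}"
  shows "(\<Sum>m\<in>{1..N}. indicator {tt (m-1)<..tt m} t *\<^sub>R f m) = f n"
proof -
  have "(\<Sum>m\<in>{1..N}. indicator {tt (m-1)<..tt m} t *\<^sub>R f m)
      = indicator {tt (n-1)<..tt n} t *\<^sub>R f n + (\<Sum>m\<in>{1..N}-{n}. indicator {tt (m-1)<..tt m} t *\<^sub>R f m)"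
    using assms by (subst sum.remove) auto
  also have "(\<Sum>m\<in>{1..N}-{n}. indicator {tt (m-1)<..tt m} t *\<^sub>R f m) = 0"
    using unique_Ioc[OF assms(1) _ assms(2)] by (intro sum.neutral) (auto simp: indicator_def)
  finally show ?thesis using assms by simp
qed

lemma sum_single_Ioo:
  fixes f :: "nat \<Rightarrow> 'b::real_vector"
  assumes "n \<in> {1..N}" "t \<in> {tt (n-1)<..<tt n}"
  shows "(\<Sum>m\<in>{1..N}. indicator {tt (m-1)<..<tt m} t *\<^sub>R f m) = f n"
proof -
  have "(\<Sum>m\<in>{1..N}. indicator {tt (m-1)<..<tt m} t *\<^sub>R f m)
      = indicator {tt (n-1)<..<tt n} t *\<^sub>R f n + (\<Sum>m\<in>{1..N}-{n}. indicator {tt (m-1)<..<tt m} t *\<^sub>R f m)"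
    using assms by (subst sum.remove) auto
  also have "(\<Sum>m\<in>{1..N}-{n}. indicator {tt (m-1)<..<tt m} t *\<^sub>R f m) = 0"
  proof (intro sum.neutral ballI)
    fix m assume m: "m \<in> {1..N} - {n}"
    have "\<not> (tt (m-1) < t \<and> t < tt m)"
    proof
      assume "tt (m-1) < t \<and> t < tt m"
      then have "n = m" using unique_Ioc[OF assms(1), of m t] assms(2) m by auto
      then show False using m by auto
    qed
    then show "indicator {tt (m-1)<..<tt m} t *\<^sub>R f m = 0" by (auto simp: indicator_def)
  qed
  finally show ?thesis using assms by simp
qed

lemma g_in: "n \<in> {1..N} \<Longrightarrow> tt (n-1) < t \<Longrightarrow> t < tt n \<Longrightarrow> g t = \<phi> t - dd n"
  unfolding g_eq by (rule sum_single_Ioo) auto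

lemma g_out: "(\<And>n. n \<in> {1..N} \<Longrightarrow> \<not> (tt (n-1) < t \<and> t < tt n)) \<Longrightarrow> g t = 0"
  unfolding g_eq by (intro sum.neutral) (auto simp: indicator_def)

lemma g_nz: "g t \<noteq> 0 \<Longrightarrow> \<exists>n\<in>{1..N}. tt (n-1) < t \<and> t < tt n"
  using g_out by blast

lemma g_nz_range: "g t \<noteq> 0 \<Longrightarrow> 0 < t \<and> t < T"
proof -
  assume "g t \<noteq> 0"
  then obtain n where n: "n \<in> {1..N}" "tt (n-1) < t" "t < tt n" using g_nz by blast
  have "0 \<le> tt (n-1)" by (rule tt_nonneg)
  moreover have "tt n \<le> tt N" using n by (intro tt_le) auto
  ultimately show ?thesis using n ttN by auto
qed

lemma phi_int: "set_integrable lborel {0..T} \<phi>"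
  unfolding set_integrable_def
proof (rule Bochner_Integration.integrable_bound[where f="\<lambda>x. indicator {0..T} x * (1 + (norm (\<phi> x))\<^sup>2)"])
  show "integrable lborel (\<lambda>x. indicator {0..T} x * (1 + (norm (\<phi> x))\<^sup>2))"
    using phi2 unfolding set_integrable_def distrib_left
    by (intro Bochner_Integration.integrable_add integrable_real_indicator) (use T in auto)
  show "(\<lambda>x. indicator {0..T} x *\<^sub>R \<phi> x) \<in> borel_measurable lborel" by measurable
  show "AE x in lborel. norm (indicator {0..T} x *\<^sub>R \<phi> x) \<le> norm (indicator {0..T} x * (1 + (norm (\<phi> x))\<^sup>2))"
  proof (intro AE_I2)
    fix x
    have "norm (\<phi> x) \<le> 1 + (norm (\<phi> x))\<^sup>2"
    proof (cases "norm (\<phi> x) \<le> 1")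
      case True then show ?thesis by (smt (verit) norm_ge_zero zero_le_power2)
    next
      case False then have "norm (\<phi> x) \<le> norm (\<phi> x) * norm (\<phi> x)" by (simp add: mult_le_cancel_left1)
      then show ?thesis by (simp add: power2_eq_square)
    qed
    then show "norm (indicator {0..T} x *\<^sub>R \<phi> x) \<le> norm (indicator {0..T} x * (1 + (norm (\<phi> x))\<^sup>2))"
      by (auto simp: indicator_def)
  qed
qed

lemma phi_int_sub: "A \<in> sets borel \<Longrightarrow> A \<subseteq> {0..T} \<Longrightarrow> set_integrable lborel A \<phi>"
  by (rule set_integrable_subset[OF phi_int]) auto

lemma y_diff:
  assumes "0 \<le> a" "a \<le> b" "b \<le> T"
  shows "y b - y a = (LINT s:{a<..b}|lborel. \<phi> s)"
proof -
  have "{0..b} = {0..a} \<union> {a<..b}" using assms by auto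
  then have "(LINT s:{0..b}|lborel. \<phi> s) = (LINT s:{0..a}|lborel. \<phi> s) + (LINT s:{a<..b}|lborel. \<phi> s)"
    using assms by (simp only:) (rule set_integral_Un; (intro phi_int_sub)?; auto)
  then show ?thesis by (simp add: y_def prim_def)
qed

lemma g_mean:
  assumes j: "j \<in> {1..N}"
  shows "integral\<^sup>L lborel (\<lambda>s. indicator {tt (j-1)<..tt j} s *\<^sub>R g s) = 0"
proof -
  let ?a = "tt (j-1)" and ?b = "tt j"
  have ab: "?a < ?b" using j by (intro tt_less) auto
  have bT: "?b \<le> T" using j ttN tt_le[of j N] by auto
  have "integral\<^sup>L lborel (\<lambda>s. indicator {?a<..?b} s *\<^sub>R g s)
      = integral\<^sup>L lborel (\<lambda>s. indicator {?a<..?b} s *\<^sub>R \<phi> s - indicator {?a<..?b} s *\<^sub>R dd j)"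
  proof (rule integral_cong_AE)
    show "AE s in lborel. indicator {?a<..?b} s *\<^sub>R g s = indicator {?a<..?b} s *\<^sub>R \<phi> s - indicator {?a<..?b} s *\<^sub>R dd j"
      using AE_lborel_singleton[of ?b]
    proof eventually_elim
      case (elim s)
      show ?case
      proof (cases "?a < s \<and> s < ?b")
        case True then show ?thesis using g_in[OF j] by (simp add: scaleR_diff_right)
      next
        case False then show ?thesis using elim by (auto simp: indicator_def)
      qed
    qed
  qed measurable
  also have "\<dots> = (LINT s:{?a<..?b}|lborel. \<phi> s) - measure lborel {?a<..?b} *\<^sub>R dd j"
  proof -
    have "{?a<..?b} \<subseteq> {0..T}" using bT tt_nonneg[of "j-1"] by auto
    then have i1: "integrable lborel (\<lambda>s. indicator {?a<..?b} s *\<^sub>R \<phi> s)"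
      using phi_int_sub[of "{?a<..?b}"] unfolding set_integrable_def by auto
    have i2: "integrable lborel (\<lambda>s. indicator {?a<..?b} s *\<^sub>R dd j)"
      using ab by (intro integrable_scaleR_left integrable_real_indicator) auto
    show ?thesis using ab
      by (subst Bochner_Integration.integral_diff[OF i1 i2]) (simp add: set_lebesgue_integral_def)
  qed
  also have "\<dots> = 0"
  proof -
    have "measure lborel {?a<..?b} = ts j" using ab by (simp add: ts_def')
    moreover have "ts j > 0" using j by (intro ts_pos) auto
    ultimately show ?thesis
      using y_diff[of ?a ?b] tt_nonneg[of "j-1"] ab bT by (simp add: dd_def)
  qed
  finally show ?thesis .
qed

end

context setting begin

lemma g_0: "g 0 = 0"
  using g_nz_range by force

lemma g_int: "integrable lborel g"
proof -
  have "integrable lborel (\<lambda>t. \<Sum>n\<in>{1..N}. indicator {tt (n-1)<..<tt n} t *\<^sub>R \<phi> t - indicator {tt (n-1)<..<tt n} t *\<^sub>R dd n)"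
  proof (intro Bochner_Integration.integrable_sum Bochner_Integration.integrable_diff)
    fix n assume n: "n \<in> {1..N}"
    have "tt n \<le> T" using n ttN tt_le[of n N] by auto
    then have "{tt (n-1)<..<tt n} \<subseteq> {0..T}" using tt_nonneg[of "n-1"] by auto
    then show "integrable lborel (\<lambda>t. indicator {tt (n-1)<..<tt n} t *\<^sub>R \<phi> t)"
      using phi_int_sub[of "{tt (n-1)<..<tt n}"] unfolding set_integrable_def by auto
    show "integrable lborel (\<lambda>t. indicator {tt (n-1)<..<tt n} t *\<^sub>R dd n)"
      using tt_le[of "n-1" n] by (intro integrable_scaleR_left integrable_real_indicator) auto
  qed
  moreover have "g = (\<lambda>t. \<Sum>n\<in>{1..N}. indicator {tt (n-1)<..<tt n} t *\<^sub>R \<phi> t - indicator {tt (n-1)<..<tt n} t *\<^sub>R dd n)"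
    by (rule ext) (simp add: g_eq scaleR_diff_right)
  ultimately show ?thesis by simp
qed

definition "D2 = (\<Sum>n\<in>{1..N}. (norm (dd n))\<^sup>2)"

lemma g2_bound: "(norm (g t))\<^sup>2 \<le> indicator {0..T} t * (2 * (norm (\<phi> t))\<^sup>2 + 2 * D2)"
proof (cases "g t = 0")
  case True then show ?thesis by (simp add: D2_def indicator_def sum_nonneg)
next
  case False
  then obtain n where n: "n \<in> {1..N}" "tt (n-1) < t" "t < tt n" using g_nz by blast
  have tT: "t \<in> {0..T}" using g_nz_range[OF False] by auto
  have "(norm (g t))\<^sup>2 = (norm (\<phi> t - dd n))\<^sup>2" using g_in[OF n] by simp
  also have "\<dots> \<le> (norm (\<phi> t) + norm (dd n))\<^sup>2"
    by (intro power_mono norm_triangle_ineq4) auto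
  also have "\<dots> \<le> 2 * (norm (\<phi> t))\<^sup>2 + 2 * (norm (dd n))\<^sup>2"
    by (smt (verit) sum_squares_bound power2_sum zero_le_power2 power2_diff)
  also have "(norm (dd n))\<^sup>2 \<le> D2" unfolding D2_def
    by (rule member_le_sum[of n "{1..N}" "\<lambda>n. (norm (dd n))\<^sup>2"]) (use n in auto)
  finally show ?thesis using tT by simp
qed

lemma g2_int: "integrable lborel (\<lambda>t. (norm (g t))\<^sup>2)"
proof (rule Bochner_Integration.integrable_bound[where f="\<lambda>t. indicator {0..T} t * (2 * (norm (\<phi> t))\<^sup>2 + 2 * D2)"])
  show "integrable lborel (\<lambda>t. indicator {0..T} t * (2 * (norm (\<phi> t))\<^sup>2 + 2 * D2))"
    using phi2 unfolding set_integrable_def distrib_left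
    by (intro Bochner_Integration.integrable_add integrable_real_indicator integrable_mult_right
         integrable_mult_left) (use T in \<open>auto simp: mult.left_commute[of _ 2]\<close>)
  show "(\<lambda>t. (norm (g t))\<^sup>2) \<in> borel_measurable lborel" by measurable
  show "AE t in lborel. norm ((norm (g t))\<^sup>2) \<le> norm (indicator {0..T} t * (2 * (norm (\<phi> t))\<^sup>2 + 2 * D2))"
  proof (intro AE_I2)
    fix t
    have "0 \<le> D2" unfolding D2_def by (intro sum_nonneg) auto
    then show "norm ((norm (g t))\<^sup>2) \<le> norm (indicator {0..T} t * (2 * (norm (\<phi> t))\<^sup>2 + 2 * D2))"
      using g2_bound[of t] by (auto simp: indicator_def)
  qed
qed

definition "L2 = (LINT t:{0..T}|lborel. (norm (g t))\<^sup>2)"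

lemma L2_eq: "L2 = integral\<^sup>L lborel (\<lambda>t. (norm (g t))\<^sup>2)"
  unfolding L2_def set_lebesgue_integral_def
proof (intro Bochner_Integration.integral_cong refl)
  fix t show "indicator {0..T} t *\<^sub>R (norm (g t))\<^sup>2 = (norm (g t))\<^sup>2"
    using g_nz_range[of t] by (cases "g t = 0") (auto simp: indicator_def)
qed

lemma L2_nn: "(\<integral>\<^sup>+t. ennreal ((norm (g t))\<^sup>2) \<partial>lborel) = ennreal L2"
  unfolding L2_eq by (rule nn_integral_eq_integral[OF g2_int]) auto

lemma L2_nonneg: "L2 \<ge> 0"
  unfolding L2_eq by (intro integral_nonneg_AE) auto

definition "k x = omega (1-\<alpha>) x"
definition "cc t s = (\<Sum>j\<in>{1..N}. (if tt (j+1) < t then indicator {tt (j-1)<..tt j} s * k (t - tt j) else 0))"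
definition "K t s = \<bar>indicator {0<..t} s * k (t - s) - cc t s\<bar>"

lemma k_meas[measurable]: "k \<in> borel_measurable borel"
  unfolding k_def omega_def[abs_def] by measurable

lemma K_meas: "(\<lambda>x. K (fst x) (snd x)) \<in> borel_measurable (lborel \<Otimes>\<^sub>M lborel)"
proof -
  have e: "K t s = \<bar>(if 0 < s \<and> s \<le> t then 1 else 0) * k (t - s)
      - (\<Sum>j\<in>{1..N}. (if tt (j+1) < t then (if tt (j-1) < s \<and> s \<le> tt j then 1 else 0) * k (t - tt j) else 0))\<bar>" for t s
    unfolding K_def cc_def indicator_def of_bool_def greaterThanAtMost_iff by simp
  have m: "(\<lambda>x. \<bar>(if 0 < snd x \<and> snd x \<le> fst x then 1 else 0) * k (fst x - snd x)
      - (\<Sum>j\<in>{1..N}. (if tt (j+1) < fst x then (if tt (j-1) < snd x \<and> snd x \<le> tt j then 1 else 0) * k (fst x - tt j) else 0))\<bar>) \<in> borel_measurable (lborel \<Otimes>\<^sub>M lborel)"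
    by measurable
  show ?thesis unfolding e by (rule m)
qed

end

context setting begin

lemma k_nonneg: "k x \<ge> 0"
  unfolding k_def using al1 by (rule omega_nonneg)

lemma k_anti: "0 < a \<Longrightarrow> a \<le> b \<Longrightarrow> k b \<le> k a"
  unfolding k_def using al0 al1 by (rule omega_antimono)

lemma cc_in:
  assumes "i \<in> {1..N}" "s \<in> {tt (i-1)<..tt i}"
  shows "cc t s = (if tt (i+1) < t then k (t - tt i) else 0)"
proof -
  have "cc t s = (\<Sum>j\<in>{1..N}. indicator {tt (j-1)<..tt j} s *\<^sub>R (if tt (j+1) < t then k (t - tt j) else 0))"
    unfolding cc_def by (intro sum.cong) auto
  also have "\<dots> = (if tt (i+1) < t then k (t - tt i) else 0)"
    by (rule sum_single_Ioc[OF assms])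
  finally show ?thesis .
qed

lemma cc_zero:
  assumes "\<And>j. j \<in> {1..N} \<Longrightarrow> tt (j+1) < t \<Longrightarrow> s \<notin> {tt (j-1)<..tt j}"
  shows "cc t s = 0"
  unfolding cc_def using assms by (intro sum.neutral) (auto simp: indicator_def)

lemma LF: "ennreal (norm (RL_int (1-\<alpha>) g t)) \<le> (\<integral>\<^sup>+s. ennreal (K t s * norm (g s)) \<partial>lborel)"
proof -
  let ?f = "\<lambda>s. indicator {0..t} s *\<^sub>R (omega (1-\<alpha>) (t - s) *\<^sub>R g s)"
  have RL: "RL_int (1-\<alpha>) g t = integral\<^sup>L lborel ?f" by (simp add: RL_int_def set_lebesgue_integral_def)
  show ?thesis
  proof (cases "integrable lborel ?f")
    case False then show ?thesis by (simp add: RL not_integrable_integral_eq)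
  next
    case True
    define h where "h s = (indicator {0<..t} s * k (t - s) - cc t s) *\<^sub>R g s" for s
    define c where "c s = cc t s *\<^sub>R g s" for s
    have fe: "?f s = h s + c s" for s
    proof (cases "s = 0")
      case True then show ?thesis by (simp add: h_def c_def g_0)
    next
      case False then show ?thesis
        by (auto simp: h_def c_def k_def indicator_def scaleR_diff_left)
    qed
    have ce: "c s = (\<Sum>j\<in>{1..N}. (if tt (j+1) < t then k (t - tt j) else 0) *\<^sub>R (indicator {tt (j-1)<..tt j} s *\<^sub>R g s))" for s
      unfolding c_def cc_def scaleR_sum_left by (intro sum.cong) auto
    have ci: "integrable lborel c"
      unfolding ce by (intro Bochner_Integration.integrable_sum integrable_scaleR_right integrable_mult_indicator g_int) auto
    define a where "a j = (if tt (j+1) < t then k (t - tt j) else 0)" for j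
    have ii: "integrable lborel (\<lambda>s. a j *\<^sub>R (indicator {tt (j-1)<..tt j} s *\<^sub>R g s))" for j
      by (intro integrable_scaleR_right integrable_mult_indicator g_int) auto
    have c0: "integral\<^sup>L lborel c = 0"
    proof -
      have "integral\<^sup>L lborel c = (\<Sum>j\<in>{1..N}. integral\<^sup>L lborel (\<lambda>s. a j *\<^sub>R (indicator {tt (j-1)<..tt j} s *\<^sub>R g s)))"
        unfolding ce a_def[symmetric] by (rule Bochner_Integration.integral_sum) (rule ii)
      also have "\<dots> = (\<Sum>j\<in>{1..N}. a j *\<^sub>R integral\<^sup>L lborel (\<lambda>s. indicator {tt (j-1)<..tt j} s *\<^sub>R g s))"
        by (intro sum.cong refl integral_scaleR_right)
      also have "\<dots> = 0" using g_mean by (intro sum.neutral) auto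
      finally show ?thesis .
    qed
    have hi: "integrable lborel h"
    proof -
      have "h = (\<lambda>s. ?f s - c s)" using fe by (auto simp: fun_eq_iff)
      then show ?thesis using True ci by simp
    qed
    have "integral\<^sup>L lborel ?f = integral\<^sup>L lborel h"
      unfolding fe using hi ci c0 by simp
    then have "norm (RL_int (1-\<alpha>) g t) = norm (integral\<^sup>L lborel h)" by (simp add: RL)
    also have "ennreal \<dots> \<le> (\<integral>\<^sup>+s. norm (h s) \<partial>lborel)"
      by (rule integral_norm_bound_ennreal[OF hi])
    also have "\<dots> = (\<integral>\<^sup>+s. ennreal (K t s * norm (g s)) \<partial>lborel)"
      by (simp add: h_def K_def)
    finally show ?thesis .
  qed
qed

end

lemma nn_ind_const:
  fixes a b d :: real assumes "a \<le> b" "d \<ge> 0"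
  shows "(\<integral>\<^sup>+s. ennreal (indicator {a<..b} s * d) \<partial>lborel) = ennreal ((b - a) * d)"
proof -
  have "(\<integral>\<^sup>+s. ennreal (indicator {a<..b} s * d) \<partial>lborel) = (\<integral>\<^sup>+s. ennreal d * indicator {a<..b} s \<partial>lborel)"
    by (intro nn_integral_cong) (auto simp: indicator_def)
  also have "\<dots> = ennreal d * emeasure lborel {a<..b}" by (rule nn_integral_cmult_indicator) auto
  also have "\<dots> = ennreal ((b - a) * d)" using assms by (simp add: ennreal_mult' mult.commute)
  finally show ?thesis .
qed

context setting begin

definition "AA = 12 * (2 * BB * tau) powr (1-\<alpha>)"

lemma gam_div: "x \<ge> 0 \<Longrightarrow> x / ((1-\<alpha>) * Gamma (1-\<alpha>)) \<le> 6 * x"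
  using Gamma_bounds[OF al0 al1] al1
  by (simp add: divide_le_eq mult.commute mult.left_commute)
     (metis mult.right_neutral mult_left_mono)

lemma gam_div2: "x \<ge> 0 \<Longrightarrow> x / Gamma (1-\<alpha>) \<le> 6 * x"
  using Gamma_bounds[OF al0 al1] al1
  by (simp add: divide_le_eq mult.commute mult.left_commute)
     (metis mult.right_neutral mult_left_mono)

lemma pow_le_AA: "0 \<le> x \<Longrightarrow> x \<le> 2 * BB * tau \<Longrightarrow> 6 * (x powr (1-\<alpha>)) \<le> AA / 2"
  unfolding AA_def using al1 by (simp add: powr_mono2)

lemma telescope:
  "tt m < t \<Longrightarrow> (\<Sum>j=1..m. ts j * (k (t - tt j) - k (t - tt (j-1)))) \<le> ts m * k (t - tt m)"
proof (induction m)
  case 0 then show ?case by (simp add: ts_def')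
next
  case (Suc m)
  have tm: "tt m < t" using Suc.prems tt_less[of m "Suc m"] by auto
  have "(\<Sum>j=1..Suc m. ts j * (k (t - tt j) - k (t - tt (j-1))))
      = (\<Sum>j=1..m. ts j * (k (t - tt j) - k (t - tt (j-1)))) + ts (Suc m) * (k (t - tt (Suc m)) - k (t - tt m))"
    by simp
  also have "\<dots> \<le> ts m * k (t - tt m) + ts (Suc m) * (k (t - tt (Suc m)) - k (t - tt m))"
    using Suc.IH[OF tm] by simp
  also have "\<dots> \<le> ts (Suc m) * k (t - tt m) + ts (Suc m) * (k (t - tt (Suc m)) - k (t - tt m))"
    using ts_mono_Suc[of m] k_nonneg[of "t - tt m"] by (simp add: mult_right_mono)
  also have "\<dots> = ts (Suc m) * k (t - tt (Suc m))" by (simp add: algebra_simps)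
  finally show ?case .
qed

lemma row_pt:
  assumes n: "n \<in> {1..N}" "tt (n-1) < t" "t < tt n"
  shows "K t s \<le> indicator {tt (n-2)..t} s * k (t - s)
     + (\<Sum>j=1..n-2. indicator {tt (j-1)<..tt j} s * (k (t - tt j) - k (t - tt (j-1))))"
proof -
  have fnn: "0 \<le> indicator {tt (j-1)<..tt j} s * (k (t - tt j) - k (t - tt (j-1)))" if j: "j \<in> {1..n-2}" for j
  proof -
    have "tt j < tt (n-1)" using j by (intro tt_less) auto
    then have "0 < t - tt j" using n by auto
    moreover have "t - tt j \<le> t - tt (j-1)" using tt_le[of "j-1" j] by auto
    ultimately have "k (t - tt (j-1)) \<le> k (t - tt j)" by (rule k_anti)
    then show ?thesis by simp
  qed
  have Snn: "0 \<le> (\<Sum>j=1..n-2. indicator {tt (j-1)<..tt j} s * (k (t - tt j) - k (t - tt (j-1))))"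
    using fnn by (intro sum_nonneg) auto
  have Nnn: "0 \<le> indicator {tt (n-2)..t} s * k (t - s)" using k_nonneg by simp
  have tT: "t < T" using n ttN tt_le[of n N] by auto
  consider "s \<le> 0 \<or> t < s" | "0 < s \<and> s \<le> t" by linarith
  then show ?thesis
  proof cases
    case 1
    have "cc t s = 0"
    proof (rule cc_zero)
      fix j assume j: "j \<in> {1..N}" "tt (j+1) < t"
      show "s \<notin> {tt (j-1)<..tt j}"
        using 1 j tt_nonneg[of "j-1"] tt_less[of j "j+1"] by auto
    qed
    then have "K t s = 0" using 1 by (auto simp: K_def indicator_def)
    then show ?thesis using Snn Nnn by simp
  next
    case 2
    then obtain i where i: "i \<in> {1..N}" "tt (i-1) < s" "s \<le> tt i"
      using interval_exists[of s] tT by auto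
    have cci: "cc t s = (if tt (i+1) < t then k (t - tt i) else 0)" using cc_in[OF i(1)] i by auto
    show ?thesis
    proof (cases "tt (i+1) < t")
      case True
      then have "tt (i+1) < tt n" using n by auto
      then have "i+1 < n" by (simp add: tt_less_iff)
      then have iin: "i \<in> {1..n-2}" using i by auto
      have ti: "tt i < t" using True tt_less[of i "i+1"] by auto
      have "k (t - s) \<le> k (t - tt i)" using i ti by (intro k_anti) auto
      moreover have "k (t - tt (i-1)) \<le> k (t - s)" using i ti by (intro k_anti) auto
      ultimately have "K t s \<le> k (t - tt i) - k (t - tt (i-1))"
        using 2 cci True by (simp add: K_def indicator_def)
      also have "\<dots> = indicator {tt (i-1)<..tt i} s * (k (t - tt i) - k (t - tt (i-1)))"
        using i by simp
      also have "\<dots> \<le> (\<Sum>j=1..n-2. indicator {tt (j-1)<..tt j} s * (k (t - tt j) - k (t - tt (j-1))))"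
        by (rule member_le_sum[OF iin]) (use fnn in auto)
      finally show ?thesis using Nnn by simp
    next
      case False
      then have "tt (n-1) < tt (i+1)" using n by auto
      then have "n - 1 < i + 1" by (simp add: tt_less_iff)
      then have "n - 2 \<le> i - 1" by auto
      then have "tt (n-2) \<le> tt (i-1)" by (rule tt_le)
      then have "s \<in> {tt (n-2)..t}" using i 2 by auto
      then have "K t s = indicator {tt (n-2)..t} s * k (t - s)"
        using 2 cci False k_nonneg by (simp add: K_def indicator_def)
      then show ?thesis using Snn by simp
    qed
  qed
qed

lemma row:
  assumes n: "n \<in> {1..N}" "tt (n-1) < t" "t < tt n"
  shows "(\<integral>\<^sup>+s. ennreal (K t s) \<partial>lborel) \<le> ennreal AA"
proof -
  define d where "d j = k (t - tt j) - k (t - tt (j-1))" for j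
  have dnn: "0 \<le> d j" if j: "j \<in> {1..n-2}" for j
  proof -
    have "tt j < tt (n-1)" using j by (intro tt_less) auto
    then have "0 < t - tt j" using n by auto
    moreover have "t - tt j \<le> t - tt (j-1)" using tt_le[of "j-1" j] by auto
    ultimately have "k (t - tt (j-1)) \<le> k (t - tt j)" by (rule k_anti)
    then show ?thesis by (simp add: d_def)
  qed
  have "tt (n-2) \<le> tt (n-1)" by (rule tt_le) auto
  then have a0: "tt (n-2) \<le> t" using n by auto
  have "(\<integral>\<^sup>+s. ennreal (K t s) \<partial>lborel)
      \<le> (\<integral>\<^sup>+s. ennreal (indicator {tt (n-2)..t} s * k (t - s)) + (\<Sum>j=1..n-2. ennreal (indicator {tt (j-1)<..tt j} s * d j)) \<partial>lborel)"
  proof (intro nn_integral_mono)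
    fix s
    have "ennreal (K t s) \<le> ennreal (indicator {tt (n-2)..t} s * k (t - s) + (\<Sum>j=1..n-2. indicator {tt (j-1)<..tt j} s * d j))"
      using row_pt[OF n, of s] unfolding d_def by (intro ennreal_leI) auto
    also have "\<dots> = ennreal (indicator {tt (n-2)..t} s * k (t - s)) + (\<Sum>j=1..n-2. ennreal (indicator {tt (j-1)<..tt j} s * d j))"
    proof -
      have S: "0 \<le> (\<Sum>j=1..n-2. indicator {tt (j-1)<..tt j} s * d j)" using dnn by (intro sum_nonneg) auto
      have e2: "ennreal (\<Sum>j=1..n-2. indicator {tt (j-1)<..tt j} s * d j) = (\<Sum>j=1..n-2. ennreal (indicator {tt (j-1)<..tt j} s * d j))"
        by (rule sum_ennreal[symmetric]) (use dnn in auto)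
      show ?thesis using S k_nonneg[of "t - s"] by (simp only: ennreal_plus e2[symmetric]) simp
    qed
    finally show "ennreal (K t s) \<le> \<dots>" .
  qed
  also have "\<dots> = (\<integral>\<^sup>+s. ennreal (indicator {tt (n-2)..t} s * k (t - s)) \<partial>lborel) + (\<Sum>j=1..n-2. \<integral>\<^sup>+s. ennreal (indicator {tt (j-1)<..tt j} s * d j) \<partial>lborel)"
    by (subst nn_integral_add) (auto intro!: nn_integral_sum)
  also have "\<dots> = ennreal ((t - tt (n-2)) powr (1-\<alpha>) / ((1-\<alpha>) * Gamma (1-\<alpha>))) + (\<Sum>j=1..n-2. ennreal ((tt j - tt (j-1)) * d j))"
    using pow_int_left[OF al0 al1 a0] nn_ind_const tt_le dnn unfolding k_def by (intro arg_cong2[where f="(+)"] sum.cong refl) auto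
  also have "\<dots> = ennreal ((t - tt (n-2)) powr (1-\<alpha>) / ((1-\<alpha>) * Gamma (1-\<alpha>)) + (\<Sum>j=1..n-2. ts j * d j))"
  proof -
    have S: "0 \<le> (\<Sum>j=1..n-2. ts j * d j)" using dnn ts_nonneg by (intro sum_nonneg) auto
    have A: "0 \<le> (t - tt (n-2)) powr (1-\<alpha>) / ((1-\<alpha>) * Gamma (1-\<alpha>))" using Gamma_bounds[OF al0 al1] by simp
    have e2: "(\<Sum>j=1..n-2. ennreal ((tt j - tt (j-1)) * d j)) = ennreal (\<Sum>j=1..n-2. ts j * d j)"
      unfolding ts_def' by (rule sum_ennreal) (use dnn in \<open>auto intro!: mult_nonneg_nonneg simp: tt_le_iff\<close>)
    show ?thesis by (simp only: e2 ennreal_plus[OF A S])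
  qed
  also have "\<dots> \<le> ennreal AA"
  proof (intro ennreal_leI)
    have near: "(t - tt (n-2)) powr (1-\<alpha>) / ((1-\<alpha>) * Gamma (1-\<alpha>)) \<le> AA / 2"
    proof -
      have "t - tt (n-2) \<le> ts n + ts (n-1)"
      proof (cases "n = 1")
        case True then show ?thesis using n by (simp add: ts_def')
      next
        case False then have "n \<ge> 2" using n by auto
        then have "tt n - tt (n-2) = ts n + ts (n-1)"
          by (simp add: ts_def' numeral_2_eq_2 Suc_diff_Suc)
        then show ?thesis using n by simp
      qed
      also have "\<dots> \<le> 2 * BB * tau"
      proof -
        have "ts n \<le> BB * tau" "ts (n-1) \<le> BB * tau" using n by (intro ts_bound; auto)+
        then show ?thesis by simp
      qed
      finally have le: "t - tt (n-2) \<le> 2 * BB * tau" .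
      have "(t - tt (n-2)) powr (1-\<alpha>) / ((1-\<alpha>) * Gamma (1-\<alpha>)) \<le> 6 * (t - tt (n-2)) powr (1-\<alpha>)"
        by (rule gam_div) simp
      also have "\<dots> \<le> AA / 2" using le a0 by (intro pow_le_AA) auto
      finally show ?thesis .
    qed
    have far: "(\<Sum>j=1..n-2. ts j * d j) \<le> AA / 2"
    proof (cases "n - 2 = 0")
      case True then show ?thesis using AA_def by simp
    next
      case False
      have "tt (n-2) < tt (n-1)" using False by (intro tt_less) auto
      then have ln: "tt (n-2) < t" using n by auto
      have "(\<Sum>j=1..n-2. ts j * d j) \<le> ts (n-2) * k (t - tt (n-2))"
        unfolding d_def by (rule telescope[OF ln])
      also have "\<dots> \<le> ts (n-1) * k (ts (n-1))"
      proof (intro mult_mono)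
        show "ts (n-2) \<le> ts (n-1)" by (rule ts_mono) auto
        have "ts (n-1) > 0" using False by (intro ts_pos) auto
        moreover have "ts (n-1) \<le> t - tt (n-2)"
          using False n by (simp add: ts_def' numeral_2_eq_2 diff_diff_add)
        ultimately show "k (t - tt (n-2)) \<le> k (ts (n-1))" by (rule k_anti)
      qed (auto simp: ts_nonneg k_nonneg)
      also have "\<dots> = ts (n-1) powr (1-\<alpha>) / Gamma (1-\<alpha>)"
      proof -
        have p: "ts (n-1) > 0" using False by (intro ts_pos) auto
        then have "ts (n-1) * ts (n-1) powr (-\<alpha>) = ts (n-1) powr (1-\<alpha>)"
          by (simp add: powr_diff powr_minus divide_inverse)
        then show ?thesis by (simp add: k_def omega_eq)
      qed
      also have "\<dots> \<le> 6 * ts (n-1) powr (1-\<alpha>)" by (rule gam_div2) simp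
      also have "\<dots> \<le> AA / 2"
      proof (intro pow_le_AA)
        have "ts (n-1) \<le> BB * tau" using n by (intro ts_bound) auto
        moreover have "0 < BB * tau" using tau_pos BB_ge1 by simp
        ultimately show "ts (n-1) \<le> 2 * BB * tau" by (subst mult.assoc) linarith
      qed (rule ts_nonneg)
      finally show ?thesis .
    qed
    show "(t - tt (n-2)) powr (1-\<alpha>) / ((1-\<alpha>) * Gamma (1-\<alpha>)) + (\<Sum>j=1..n-2. ts j * d j) \<le> AA"
      using near far by linarith
  qed
  finally show ?thesis .
qed

end

context setting begin

definition "K1 x = x powr (1-\<alpha>) / ((1-\<alpha>) * Gamma (1-\<alpha>))"

lemma K1_nonneg: "K1 x \<ge> 0"
  unfolding K1_def using Gamma_bounds[OF al0 al1] by simp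

lemma K1_mono: "0 \<le> x \<Longrightarrow> x \<le> z \<Longrightarrow> K1 x \<le> K1 z"
  unfolding K1_def using Gamma_bounds[OF al0 al1] al1
  by (intro divide_right_mono powr_mono2) auto

lemma dK1: "c < x \<Longrightarrow> DERIV (\<lambda>x. K1 (x - c)) x :> k (x - c)"
proof -
  assume cx: "c < x"
  have d1: "DERIV (\<lambda>x. x - c) x :> 1" by (auto intro!: derivative_eq_intros)
  have "DERIV (\<lambda>x. (x - c) powr (1-\<alpha>)) x :> (1-\<alpha>) * (x - c) powr ((1-\<alpha>) - of_nat 1) * 1"
    by (rule DERIV_fun_powr[OF d1]) (use cx in simp)
  from DERIV_cdivide[OF this, of "(1-\<alpha>) * Gamma (1-\<alpha>)"]
  have "DERIV (\<lambda>x. K1 (x - c)) x :> (1-\<alpha>) * (x - c) powr ((1-\<alpha>) - of_nat 1) * 1 / ((1-\<alpha>) * Gamma (1-\<alpha>))"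
    by (simp add: K1_def)
  moreover have "(1-\<alpha>) * (x - c) powr ((1-\<alpha>) - of_nat 1) * 1 / ((1-\<alpha>) * Gamma (1-\<alpha>)) = k (x - c)"
    using al1 by (simp add: k_def omega_eq)
  ultimately show ?thesis by simp
qed

lemma col_pt:
  assumes j: "j \<in> {1..N}" "tt (j-1) < s" "s < tt j"
  shows "indicator {0..T} t * K t s \<le> indicator {s..tt (j+1)} t * k (t - s)
     + indicator {tt (j+1)..T} t * (k (t - tt j) - k (t - tt (j-1)))"
proof -
  have cci: "cc t s = (if tt (j+1) < t then k (t - tt j) else 0)" using cc_in[OF j(1)] j by auto
  have jj: "tt j < tt (j+1)" by (rule tt_less) auto
  have s0: "0 < s" using j tt_nonneg[of "j-1"] by auto
  have S2: "0 \<le> indicator {tt (j+1)..T} t * (k (t - tt j) - k (t - tt (j-1)))"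
  proof (cases "t \<in> {tt (j+1)..T}")
    case True
    then have "0 < t - tt j" using jj by auto
    moreover have "t - tt j \<le> t - tt (j-1)" using tt_le[of "j-1" j] by auto
    ultimately have "k (t - tt (j-1)) \<le> k (t - tt j)" by (rule k_anti)
    then show ?thesis by simp
  qed simp
  have S1: "0 \<le> indicator {s..tt (j+1)} t * k (t - s)" using k_nonneg by simp
  consider "t < s" | "s \<le> t \<and> t \<le> tt (j+1)" | "tt (j+1) < t" by linarith
  then show ?thesis
  proof cases
    case 1
    then have "K t s = 0" using cci jj j by (auto simp: K_def indicator_def)
    then show ?thesis using S1 S2 by simp
  next
    case 2
    then have "K t s = k (t - s)" using cci s0 k_nonneg by (auto simp: K_def indicator_def)
    then have "indicator {0..T} t * K t s \<le> indicator {s..tt (j+1)} t * k (t - s)"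
      using 2 k_nonneg by (auto simp: indicator_def)
    then show ?thesis using S2 by simp
  next
    case 3
    show ?thesis
    proof (cases "t \<le> T")
      case False then show ?thesis using S1 S2 by (simp add: indicator_def)
    next
      case True
      have ts: "s < t" using 3 j jj by auto
      have tj: "0 < t - tt j" using 3 jj by auto
      have "k (t - s) \<le> k (t - tt j)" using tj j by (intro k_anti) auto
      moreover have "k (t - tt (j-1)) \<le> k (t - s)" using ts j by (intro k_anti) auto
      ultimately have "K t s \<le> k (t - tt j) - k (t - tt (j-1))"
        using 3 cci ts s0 by (simp add: K_def indicator_def)
      then show ?thesis using S1 True 3 tt_nonneg[of "j+1"] by (simp add: indicator_def)
    qed
  qed
qed

lemma col:
  assumes j: "j \<in> {1..N}" "tt (j-1) < s" "s < tt j"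
  shows "(\<integral>\<^sup>+t. ennreal (indicator {0..T} t * K t s) \<partial>lborel) \<le> ennreal AA"
proof -
  define f where "f t = k (t - tt j) - k (t - tt (j-1))" for t
  have jj: "tt j < tt (j+1)" by (rule tt_less) auto
  have fnn: "0 \<le> f t" if "tt (j+1) \<le> t" for t
  proof -
    have "0 < t - tt j" using that jj by auto
    moreover have "t - tt j \<le> t - tt (j-1)" using tt_le[of "j-1" j] by auto
    ultimately have "k (t - tt (j-1)) \<le> k (t - tt j)" by (rule k_anti)
    then show ?thesis by (simp add: f_def)
  qed
  have sb: "s \<le> tt (j+1)" using j jj by auto
  have len: "tt (j+1) - tt (j-1) \<le> 2 * BB * tau"
  proof -
    have "tt (j+1) - tt (j-1) = ts (j+1) + ts j" using j by (simp add: ts_def')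
    moreover have "ts (j+1) \<le> BB * tau" "ts j \<le> BB * tau" using j by (intro ts_bound; auto)+
    ultimately show ?thesis by simp
  qed
  have "(\<integral>\<^sup>+t. ennreal (indicator {0..T} t * K t s) \<partial>lborel)
      \<le> (\<integral>\<^sup>+t. ennreal (indicator {s..tt (j+1)} t * k (t - s)) + ennreal (indicator {tt (j+1)..T} t * f t) \<partial>lborel)"
  proof (intro nn_integral_mono)
    fix t
    have nn: "0 \<le> indicator {tt (j+1)..T} t * f t" using fnn by (auto simp: indicator_def)
    have "ennreal (indicator {0..T} t * K t s) \<le> ennreal (indicator {s..tt (j+1)} t * k (t - s) + indicator {tt (j+1)..T} t * f t)"
      using col_pt[OF j, of t] unfolding f_def by (intro ennreal_leI) auto
    also have "\<dots> = ennreal (indicator {s..tt (j+1)} t * k (t - s)) + ennreal (indicator {tt (j+1)..T} t * f t)"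
      using nn k_nonneg[of "t - s"] by (intro ennreal_plus) auto
    finally show "ennreal (indicator {0..T} t * K t s) \<le> \<dots>" .
  qed
  also have "\<dots> = (\<integral>\<^sup>+t. ennreal (indicator {s..tt (j+1)} t * k (t - s)) \<partial>lborel) + (\<integral>\<^sup>+t. ennreal (indicator {tt (j+1)..T} t * f t) \<partial>lborel)"
    unfolding f_def by (rule nn_integral_add) auto
  also have "(\<integral>\<^sup>+t. ennreal (indicator {s..tt (j+1)} t * k (t - s)) \<partial>lborel) = ennreal (K1 (tt (j+1) - s))"
    using pow_int_right[OF al0 al1 sb] by (simp add: k_def K1_def)
  also have "(\<integral>\<^sup>+t. ennreal (indicator {tt (j+1)..T} t * f t) \<partial>lborel) \<le> ennreal (K1 (tt (j+1) - tt (j-1)))"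
  proof (cases "tt (j+1) \<le> T")
    case False
    then have "(\<lambda>t. ennreal (indicator {tt (j+1)..T} t * f t)) = (\<lambda>t. 0)" by (auto simp: fun_eq_iff)
    then show ?thesis by simp
  next
    case True
    define F where "F x = K1 (x - tt j) - K1 (x - tt (j-1))" for x
    have "(\<integral>\<^sup>+t. ennreal (indicator {tt (j+1)..T} t * f t) \<partial>lborel) = (\<integral>\<^sup>+t. ennreal (f t) * indicator {tt (j+1)..T} t \<partial>lborel)"
      by (intro nn_integral_cong) (auto simp: indicator_def)
    also have "\<dots> = ennreal (F T - F (tt (j+1)))"
    proof (rule nn_integral_FTC_Icc)
      show "f \<in> borel_measurable borel" unfolding f_def by measurable
      show "tt (j+1) \<le> T" by (rule True)
      fix x assume x: "x \<in> {tt (j+1)..T}"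
      show "0 \<le> f x" using x fnn by auto
      have "tt (j-1) < tt j" using j by (intro tt_less) auto
      then have "tt j < x" "tt (j-1) < x" using x jj by auto
      then show "DERIV F x :> f x"
        unfolding F_def f_def by (intro DERIV_diff dK1)
    qed
    also have "\<dots> \<le> ennreal (K1 (tt (j+1) - tt (j-1)))"
    proof (intro ennreal_leI)
      have "K1 (T - tt j) \<le> K1 (T - tt (j-1))"
        using True jj tt_le[of "j-1" j] by (intro K1_mono) auto
      then show "F T - F (tt (j+1)) \<le> K1 (tt (j+1) - tt (j-1))"
        using K1_nonneg[of "tt (j+1) - tt j"] by (simp add: F_def)
    qed
    finally show ?thesis .
  qed
  also have "ennreal (K1 (tt (j+1) - s)) + ennreal (K1 (tt (j+1) - tt (j-1))) \<le> ennreal AA"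
  proof -
    have a: "K1 (tt (j+1) - s) \<le> AA / 2"
    proof -
      have "K1 (tt (j+1) - s) \<le> 6 * (tt (j+1) - s) powr (1-\<alpha>)" unfolding K1_def by (rule gam_div) simp
      also have "\<dots> \<le> AA / 2" using len sb j by (intro pow_le_AA) auto
      finally show ?thesis .
    qed
    have b: "K1 (tt (j+1) - tt (j-1)) \<le> AA / 2"
    proof -
      have "K1 (tt (j+1) - tt (j-1)) \<le> 6 * (tt (j+1) - tt (j-1)) powr (1-\<alpha>)" unfolding K1_def by (rule gam_div) simp
      also have "\<dots> \<le> AA / 2" using len tt_le[of "j-1" "j+1"] by (intro pow_le_AA) auto
      finally show ?thesis .
    qed
    have "ennreal (K1 (tt (j+1) - s)) + ennreal (K1 (tt (j+1) - tt (j-1))) = ennreal (K1 (tt (j+1) - s) + K1 (tt (j+1) - tt (j-1)))"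
      using K1_nonneg by (simp add: ennreal_plus)
    also have "\<dots> \<le> ennreal AA" using a b by (intro ennreal_leI) linarith
    finally show ?thesis .
  qed
  finally show ?thesis by (simp add: add_left_mono)
qed

end

context setting begin

lemma K_meas2[measurable]: "(\<lambda>x. K (fst x) (snd x)) \<in> borel_measurable (lborel \<Otimes>\<^sub>M lborel)"
  by (rule K_meas)

lemma K_meas_s[measurable]: "(\<lambda>s. K t s) \<in> borel_measurable lborel"
  using measurable_Pair2[OF K_meas, of t] by simp

lemma K_meas_t[measurable]: "(\<lambda>t. K t s) \<in> borel_measurable lborel"
  using measurable_Pair1[OF K_meas, of s] by simp

lemma ab_le: fixes a b :: real assumes "0 \<le> a" "0 \<le> b" shows "a * b \<le> a\<^sup>2 + b\<^sup>2"
proof -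
  have "0 \<le> (a - b)\<^sup>2" by simp
  then have "2 * (a * b) \<le> a\<^sup>2 + b\<^sup>2" by (simp add: power2_diff)
  moreover have "0 \<le> a * b" using assms by simp
  ultimately show ?thesis by linarith
qed

lemma AA_nonneg: "AA \<ge> 0" by (simp add: AA_def)

lemma main_bound:
  "\<bar>LINT t:{0..T}|lborel. inner (g t) (RL_int (1-\<alpha>) g t)\<bar> \<le> 2 * AA * L2"
proof -
  define F where "F t = RL_int (1-\<alpha>) g t" for t
  define h where "h t = indicator {0..T} t *\<^sub>R inner (g t) (F t)" for t
  have LHS: "(LINT t:{0..T}|lborel. inner (g t) (RL_int (1-\<alpha>) g t)) = integral\<^sup>L lborel h"
    unfolding set_lebesgue_integral_def h_def[abs_def] F_def[abs_def] by simp
  show ?thesis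
  proof (cases "integrable lborel h")
    case False
    then show ?thesis unfolding LHS using AA_nonneg L2_nonneg by (simp add: not_integrable_integral_eq)
  next
    case True
    have hm: "h \<in> borel_measurable lborel" using True by measurable
    have "\<bar>integral\<^sup>L lborel h\<bar> \<le> integral\<^sup>L lborel (\<lambda>t. \<bar>h t\<bar>)" by (rule integral_abs_bound)
    also have "\<dots> = enn2real (\<integral>\<^sup>+t. ennreal \<bar>h t\<bar> \<partial>lborel)"
      by (rule integral_eq_nn_integral) (use hm in auto)
    also have "\<dots> \<le> 2 * AA * L2"
    proof (rule enn2real_leI)
      show "0 \<le> 2 * AA * L2" using AA_nonneg L2_nonneg by simp
      define X1 where "X1 t s = indicator {0..T} t * K t s * (norm (g t))\<^sup>2" for t s
      define X2 where "X2 t s = indicator {0..T} t * K t s * (norm (g s))\<^sup>2" for t s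
      have X1m[measurable]: "(\<lambda>x. ennreal (X1 (fst x) (snd x))) \<in> borel_measurable (lborel \<Otimes>\<^sub>M lborel)"
        unfolding X1_def by measurable
      have X2m[measurable]: "(\<lambda>x. ennreal (X2 (fst x) (snd x))) \<in> borel_measurable (lborel \<Otimes>\<^sub>M lborel)"
        unfolding X2_def by measurable
      have "(\<integral>\<^sup>+t. ennreal \<bar>h t\<bar> \<partial>lborel)
          \<le> (\<integral>\<^sup>+t. ennreal (indicator {0..T} t * norm (g t)) * (\<integral>\<^sup>+s. ennreal (K t s * norm (g s)) \<partial>lborel) \<partial>lborel)"
      proof (intro nn_integral_mono)
        fix t
        have "\<bar>h t\<bar> \<le> (indicator {0..T} t * norm (g t)) * norm (F t)"
          unfolding h_def using Cauchy_Schwarz_ineq2[of "g t" "F t"]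
          by (auto simp: indicator_def)
        then have "ennreal \<bar>h t\<bar> \<le> ennreal ((indicator {0..T} t * norm (g t)) * norm (F t))"
          by (rule ennreal_leI)
        also have "\<dots> = ennreal (indicator {0..T} t * norm (g t)) * ennreal (norm (F t))"
          by (rule ennreal_mult) auto
        also have "\<dots> \<le> ennreal (indicator {0..T} t * norm (g t)) * (\<integral>\<^sup>+s. ennreal (K t s * norm (g s)) \<partial>lborel)"
          unfolding F_def by (intro mult_left_mono LF) auto
        finally show "ennreal \<bar>h t\<bar> \<le> \<dots>" .
      qed
      also have "\<dots> = (\<integral>\<^sup>+t. (\<integral>\<^sup>+s. ennreal (indicator {0..T} t * norm (g t) * (K t s * norm (g s))) \<partial>lborel) \<partial>lborel)"
      proof (intro nn_integral_cong)
        fix t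
        have "(\<integral>\<^sup>+s. ennreal (indicator {0..T} t * norm (g t) * (K t s * norm (g s))) \<partial>lborel)
            = (\<integral>\<^sup>+s. ennreal (indicator {0..T} t * norm (g t)) * ennreal (K t s * norm (g s)) \<partial>lborel)"
          by (intro nn_integral_cong ennreal_mult) (auto simp: K_def)
        also have "\<dots> = ennreal (indicator {0..T} t * norm (g t)) * (\<integral>\<^sup>+s. ennreal (K t s * norm (g s)) \<partial>lborel)"
          by (rule nn_integral_cmult) measurable
        finally show "ennreal (indicator {0..T} t * norm (g t)) * (\<integral>\<^sup>+s. ennreal (K t s * norm (g s)) \<partial>lborel)
            = (\<integral>\<^sup>+s. ennreal (indicator {0..T} t * norm (g t) * (K t s * norm (g s))) \<partial>lborel)" by simp
      qed
      also have "\<dots> \<le> (\<integral>\<^sup>+t. (\<integral>\<^sup>+s. ennreal (X1 t s) + ennreal (X2 t s) \<partial>lborel) \<partial>lborel)"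
      proof (intro nn_integral_mono)
        fix t s
        have ab: "norm (g t) * norm (g s) \<le> (norm (g t))\<^sup>2 + (norm (g s))\<^sup>2"
          by (rule ab_le) auto
        have KI: "0 \<le> indicator {0..T} t * K t s" by (simp add: K_def)
        have "indicator {0..T} t * norm (g t) * (K t s * norm (g s)) = (indicator {0..T} t * K t s) * (norm (g t) * norm (g s))"
          by (simp add: algebra_simps)
        also have "\<dots> \<le> (indicator {0..T} t * K t s) * ((norm (g t))\<^sup>2 + (norm (g s))\<^sup>2)"
          by (rule mult_left_mono[OF ab KI])
        also have "\<dots> = X1 t s + X2 t s" by (simp add: X1_def X2_def algebra_simps)
        finally have "ennreal (indicator {0..T} t * norm (g t) * (K t s * norm (g s))) \<le> ennreal (X1 t s + X2 t s)"
          by (rule ennreal_leI)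
        also have "\<dots> = ennreal (X1 t s) + ennreal (X2 t s)"
          by (rule ennreal_plus) (auto simp: X1_def X2_def K_def)
        finally show "ennreal (indicator {0..T} t * norm (g t) * (K t s * norm (g s))) \<le> ennreal (X1 t s) + ennreal (X2 t s)" .
      qed
      also have "\<dots> = (\<integral>\<^sup>+t. (\<integral>\<^sup>+s. ennreal (X1 t s) \<partial>lborel) + (\<integral>\<^sup>+s. ennreal (X2 t s) \<partial>lborel) \<partial>lborel)"
      proof (intro nn_integral_cong nn_integral_add)
        fix t
        show "(\<lambda>s. ennreal (X1 t s)) \<in> borel_measurable lborel"
          using measurable_Pair2[OF X1m, of t] by simp
        show "(\<lambda>s. ennreal (X2 t s)) \<in> borel_measurable lborel"
          using measurable_Pair2[OF X2m, of t] by simp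
      qed
      also have "\<dots> = (\<integral>\<^sup>+t. (\<integral>\<^sup>+s. ennreal (X1 t s) \<partial>lborel) \<partial>lborel) + (\<integral>\<^sup>+t. (\<integral>\<^sup>+s. ennreal (X2 t s) \<partial>lborel) \<partial>lborel)"
      proof (rule nn_integral_add)
        show "(\<lambda>t. \<integral>\<^sup>+s. ennreal (X1 t s) \<partial>lborel) \<in> borel_measurable lborel"
          using lborel.borel_measurable_nn_integral[of "\<lambda>t s. ennreal (X1 t s)" lborel] X1m
          by (simp add: split_beta')
        show "(\<lambda>t. \<integral>\<^sup>+s. ennreal (X2 t s) \<partial>lborel) \<in> borel_measurable lborel"
          using lborel.borel_measurable_nn_integral[of "\<lambda>t s. ennreal (X2 t s)" lborel] X2m
          by (simp add: split_beta')
      qed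
      also have "(\<integral>\<^sup>+t. (\<integral>\<^sup>+s. ennreal (X1 t s) \<partial>lborel) \<partial>lborel) \<le> ennreal AA * ennreal L2"
      proof -
        have "(\<integral>\<^sup>+t. (\<integral>\<^sup>+s. ennreal (X1 t s) \<partial>lborel) \<partial>lborel) \<le> (\<integral>\<^sup>+t. ennreal AA * ennreal ((norm (g t))\<^sup>2) \<partial>lborel)"
        proof (intro nn_integral_mono)
          fix t
          have "(\<integral>\<^sup>+s. ennreal (X1 t s) \<partial>lborel) = (\<integral>\<^sup>+s. ennreal (indicator {0..T} t * (norm (g t))\<^sup>2) * ennreal (K t s) \<partial>lborel)"
          proof (intro nn_integral_cong)
            fix s
            have "X1 t s = (indicator {0..T} t * (norm (g t))\<^sup>2) * K t s" by (simp add: X1_def algebra_simps)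
            then show "ennreal (X1 t s) = ennreal (indicator {0..T} t * (norm (g t))\<^sup>2) * ennreal (K t s)"
              by (subst ennreal_mult[symmetric]) (auto simp: K_def)
          qed
          also have "\<dots> = ennreal (indicator {0..T} t * (norm (g t))\<^sup>2) * (\<integral>\<^sup>+s. ennreal (K t s) \<partial>lborel)"
            by (rule nn_integral_cmult) measurable
          also have "\<dots> \<le> ennreal AA * ennreal ((norm (g t))\<^sup>2)"
          proof (cases "g t = 0")
            case True then show ?thesis by simp
          next
            case False
            then obtain n where n: "n \<in> {1..N}" "tt (n-1) < t" "t < tt n" using g_nz by blast
            have "ennreal (indicator {0..T} t * (norm (g t))\<^sup>2) \<le> ennreal ((norm (g t))\<^sup>2)"
              by (intro ennreal_leI) (auto simp: indicator_def)
            then have "ennreal (indicator {0..T} t * (norm (g t))\<^sup>2) * (\<integral>\<^sup>+s. ennreal (K t s) \<partial>lborel)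
                \<le> ennreal ((norm (g t))\<^sup>2) * ennreal AA"
              using row[OF n] by (intro mult_mono) auto
            then show ?thesis by (simp add: mult.commute)
          qed
          finally show "(\<integral>\<^sup>+s. ennreal (X1 t s) \<partial>lborel) \<le> ennreal AA * ennreal ((norm (g t))\<^sup>2)" .
        qed
        also have "\<dots> = ennreal AA * ennreal L2"
          by (subst nn_integral_cmult) (auto simp: L2_nn)
        finally show ?thesis .
      qed
      also have "(\<integral>\<^sup>+t. (\<integral>\<^sup>+s. ennreal (X2 t s) \<partial>lborel) \<partial>lborel) \<le> ennreal AA * ennreal L2"
      proof -
        have "(\<integral>\<^sup>+t. (\<integral>\<^sup>+s. ennreal (X2 t s) \<partial>lborel) \<partial>lborel) = (\<integral>\<^sup>+s. (\<integral>\<^sup>+t. ennreal (X2 t s) \<partial>lborel) \<partial>lborel)"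
          by (rule lborel_pair.Fubini'[symmetric]) (use X2m in \<open>simp add: split_beta'\<close>)
        also have "\<dots> \<le> (\<integral>\<^sup>+s. ennreal AA * ennreal ((norm (g s))\<^sup>2) \<partial>lborel)"
        proof (intro nn_integral_mono)
          fix s
          have "(\<integral>\<^sup>+t. ennreal (X2 t s) \<partial>lborel) = (\<integral>\<^sup>+t. ennreal ((norm (g s))\<^sup>2) * ennreal (indicator {0..T} t * K t s) \<partial>lborel)"
          proof (intro nn_integral_cong)
            fix t
            have "X2 t s = (norm (g s))\<^sup>2 * (indicator {0..T} t * K t s)" by (simp add: X2_def algebra_simps)
            then show "ennreal (X2 t s) = ennreal ((norm (g s))\<^sup>2) * ennreal (indicator {0..T} t * K t s)"
              by (subst ennreal_mult[symmetric]) (auto simp: K_def)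
          qed
          also have "\<dots> = ennreal ((norm (g s))\<^sup>2) * (\<integral>\<^sup>+t. ennreal (indicator {0..T} t * K t s) \<partial>lborel)"
            by (rule nn_integral_cmult) measurable
          also have "\<dots> \<le> ennreal AA * ennreal ((norm (g s))\<^sup>2)"
          proof (cases "g s = 0")
            case True then show ?thesis by simp
          next
            case False
            then obtain j where j: "j \<in> {1..N}" "tt (j-1) < s" "s < tt j" using g_nz by blast
            have "ennreal ((norm (g s))\<^sup>2) * (\<integral>\<^sup>+t. ennreal (indicator {0..T} t * K t s) \<partial>lborel)
                \<le> ennreal ((norm (g s))\<^sup>2) * ennreal AA"
              using col[OF j] by (intro mult_left_mono) auto
            then show ?thesis by (simp add: mult.commute)
          qed
          finally show "(\<integral>\<^sup>+t. ennreal (X2 t s) \<partial>lborel) \<le> ennreal AA * ennreal ((norm (g s))\<^sup>2)" .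
        qed
        also have "\<dots> = ennreal AA * ennreal L2"
          by (subst nn_integral_cmult) (auto simp: L2_nn)
        finally show ?thesis .
      qed
      also have "ennreal AA * ennreal L2 + ennreal AA * ennreal L2 = ennreal (2 * AA * L2)"
      proof -
        have "ennreal (2 * AA * L2) = 2 * (ennreal AA * ennreal L2)"
          using AA_nonneg L2_nonneg by (simp add: ennreal_mult'' mult.assoc)
        then show ?thesis by (simp only: mult_2)
      qed
      finally show "(\<integral>\<^sup>+t. ennreal \<bar>h t\<bar> \<partial>lborel) \<le> ennreal (2 * AA * L2)"
        by (simp add: add_mono)
    qed
    finally show ?thesis unfolding LHS .
  qed
qed

end

theorem lemma4p3:
  fixes T \<gamma> :: real
  assumes "T > 0" and "\<gamma> \<ge> 1"
  shows "\<exists>C>0. \<forall>(\<alpha>::real) (N::nat) (y0::'a::{real_inner, banach, second_countable_topology}) \<phi>.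
           0 < \<alpha> \<longrightarrow> \<alpha> < 1 \<longrightarrow> N \<ge> 1 \<longrightarrow>
           \<phi> \<in> borel_measurable lborel \<longrightarrow>
           set_integrable lborel {0..T} (\<lambda>t. (norm (\<phi> t))\<^sup>2) \<longrightarrow>
           (let y = prim y0 \<phi>;
                Y = Yerr T \<gamma> N y;
                Y' = Yder T \<gamma> N y \<phi>
            in \<bar>LINT t:{0..T}|lborel. inner (Y' t) (RL_int (1 - \<alpha>) Y' t)\<bar>
               \<le> C * (1 - \<alpha>) * (\<Sum>j=1..N-2. tstep T \<gamma> N j powr (-\<alpha>) *
                        (SUP t\<in>{tmesh T \<gamma> N (j - 1)<..<tmesh T \<gamma> N j}. norm (Y t))\<^sup>2)
                 + C * meshpar T \<gamma> N powr (1 - \<alpha>) * (LINT t:{0..T}|lborel. (norm (Y' t))\<^sup>2))"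
proof -
  define B where "B = max 1 (\<gamma> * (2 * T powr (1/\<gamma>)) powr (\<gamma> - 1))"
  have B1: "B \<ge> 1" by (simp add: B_def)
  show ?thesis
  proof (intro exI[of _ "48 * B"] conjI allI impI)
    show "0 < 48 * B" using B1 by simp
    fix \<alpha> :: real and N :: nat and y0 :: 'a and \<phi> :: "real \<Rightarrow> 'a"
    assume a0: "0 < \<alpha>" and a1: "\<alpha> < 1" and N1: "N \<ge> 1"
      and pm: "\<phi> \<in> borel_measurable lborel"
      and p2: "set_integrable lborel {0..T} (\<lambda>t. (norm (\<phi> t))\<^sup>2)"
    interpret S: setting T \<gamma> N \<alpha> y0 \<phi>
      by unfold_locales (use assms a0 a1 N1 pm p2 in auto)
    have BB: "S.BB = B" by (simp add: S.BB_def B_def)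
    have gY: "Yder T \<gamma> N (prim y0 \<phi>) \<phi> = S.g" by (simp add: S.g_def S.y_def)
    have tau: "meshpar T \<gamma> N = S.tau" by (simp add: S.tau_def)
    let ?Y = "Yerr T \<gamma> N (prim y0 \<phi>)"
    let ?S = "(\<Sum>j=1..N-2. tstep T \<gamma> N j powr (-\<alpha>) *
                        (SUP t\<in>{tmesh T \<gamma> N (j - 1)<..<tmesh T \<gamma> N j}. norm (?Y t))\<^sup>2)"
    have Snn: "0 \<le> ?S" by (intro sum_nonneg mult_nonneg_nonneg) auto
    have "\<bar>LINT t:{0..T}|lborel. inner (S.g t) (RL_int (1 - \<alpha>) S.g t)\<bar> \<le> 2 * S.AA * S.L2"
      by (rule S.main_bound)
    also have "2 * S.AA * S.L2 \<le> 48 * B * S.tau powr (1 - \<alpha>) * S.L2"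
    proof -
      have "(2 * B * S.tau) powr (1-\<alpha>) = (2 * B) powr (1-\<alpha>) * S.tau powr (1-\<alpha>)"
        using B1 S.tau_pos by (simp add: powr_mult)
      also have "(2 * B) powr (1-\<alpha>) \<le> (2 * B) powr 1"
        using B1 a0 by (intro powr_mono) auto
      finally have "(2 * B * S.tau) powr (1-\<alpha>) \<le> 2 * B * S.tau powr (1-\<alpha>)"
        using B1 by (simp add: mult_right_mono)
      then have "2 * S.AA \<le> 48 * B * S.tau powr (1 - \<alpha>)"
        unfolding S.AA_def BB by simp
      then show ?thesis using S.L2_nonneg by (intro mult_right_mono) auto
    qed
    also have "\<dots> \<le> 48 * B * (1 - \<alpha>) * ?S + 48 * B * meshpar T \<gamma> N powr (1 - \<alpha>) * (LINT t:{0..T}|lborel. (norm (S.g t))\<^sup>2)"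
    proof -
      have "0 \<le> 48 * B * (1 - \<alpha>) * ?S" using B1 a1 Snn by simp
      then show ?thesis by (simp add: tau S.L2_def)
    qed
    finally show "let y = prim y0 \<phi>; Y = Yerr T \<gamma> N y; Y' = Yder T \<gamma> N y \<phi>
            in \<bar>LINT t:{0..T}|lborel. inner (Y' t) (RL_int (1 - \<alpha>) Y' t)\<bar>
               \<le> 48 * B * (1 - \<alpha>) * (\<Sum>j=1..N-2. tstep T \<gamma> N j powr (-\<alpha>) *
                        (SUP t\<in>{tmesh T \<gamma> N (j - 1)<..<tmesh T \<gamma> N j}. norm (Y t))\<^sup>2)
                 + 48 * B * meshpar T \<gamma> N powr (1 - \<alpha>) * (LINT t:{0..T}|lborel. (norm (Y' t))\<^sup>2)"
      unfolding Let_def gY .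
  qed
qed


end
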